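(* Let $k\in\mathbb{N}$, $0<\delta\le1$, $z_1,\dots,z_k\ge1$ and $\lambda_1,\dots,\lambda_k>0$. There is a constant $c=c(k,\boldsymbol{\lambda})$ such that: (a) If $R\ge\max\{\Lambda,\delta(z_1+\cdots+z_k)\}$, then $$\mathrm{Prob}(\mathscr{H}^k(R,\delta))\gg_{k,\boldsymbol{\lambda},\delta}\frac{e^{-c|\alpha(R)|}}{\sqrt{R}}\prod_{i=1}^k\exp\{-Q(e^{\alpha(R)\lambda_i})z_i\}.$$ (b) If $R\ge\Lambda$, then $$\mathrm{Prob}(\mathscr{H}^k(R))\ll_{k,\boldsymbol{\lambda}}\frac{e^{c|\alpha(R)|}}{\sqrt{R}}\prod_{i=1}^k\exp\{-Q(e^{\alpha(R)\lambda_i})z_i\}.$$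
   Context: $\Lambda=\max_i\lambda_i$; $Q(u)=u\log u-u+1$. $\mathrm{Prob}$ denotes the $k$-dimensional Poisson distribution with parameters $z_1,\dots,z_k$, which gives each $(r_1,\dots,r_k)\in(\mathbb{N}\cup\{0\})^k$ the probability $\prod_{i=1}^ke^{-z_i}z_i^{r_i}/r_i!$. For $R\ge\Lambda$: $\mathscr{H}^k(R)=\{\mathbf{r}\in(\mathbb{N}\cup\{0\})^k: R-\Lambda<\sum_i\lambda_ir_i\le R\}$; $\alpha(R)$ is the real number defined by $\sum_{i=1}^k\lambda_ie^{\alpha(R)\lambda_i}z_i=R$; and $\mathscr{H}^k(R,\delta)$ is the set of $\mathbf{r}\in\mathscr{H}^k(R)$ with $|r_i-e^{\alpha(R)\lambda_i}z_i|\le\frac{\Lambda}{\lambda_i}\max\{k,\delta\sqrt{e^{\alpha(R)\lambda_i}z_i}\}$ for all $1\le i\le k$. *)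

theory Defs
  imports Complex_Main
begin

text \<open>Indices run over {..<k} (i.e. 0..k-1 instead of 1..k).
  Tuples r are functions nat => nat vanishing outside {..<k}.\<close>

definition Lam :: "nat \<Rightarrow> (nat \<Rightarrow> real) \<Rightarrow> real" where
  "Lam k lam = Max (lam ` {..<k})"

definition Qf :: "real \<Rightarrow> real" where
  "Qf u = u * ln u - u + 1"

definition alpha :: "nat \<Rightarrow> (nat \<Rightarrow> real) \<Rightarrow> (nat \<Rightarrow> real) \<Rightarrow> real \<Rightarrow> real" where
  "alpha k lam z R = (THE a. (\<Sum>i<k. lam i * exp (a * lam i) * z i) = R)"

definition poisson_prob :: "nat \<Rightarrow> (nat \<Rightarrow> real) \<Rightarrow> (nat \<Rightarrow> nat) \<Rightarrow> real" where
  "poisson_prob k z r = (\<Prod>i<k. exp (- z i) * z i ^ r i / fact (r i))"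

definition Prob :: "nat \<Rightarrow> (nat \<Rightarrow> real) \<Rightarrow> (nat \<Rightarrow> nat) set \<Rightarrow> real" where
  "Prob k z A = (\<Sum>r\<in>A. poisson_prob k z r)"

definition HH :: "nat \<Rightarrow> (nat \<Rightarrow> real) \<Rightarrow> real \<Rightarrow> (nat \<Rightarrow> nat) set" where
  "HH k lam R = {r. (\<forall>i\<ge>k. r i = 0) \<and>
      R - Lam k lam < (\<Sum>i<k. lam i * real (r i)) \<and> (\<Sum>i<k. lam i * real (r i)) \<le> R}"

definition HHd :: "nat \<Rightarrow> (nat \<Rightarrow> real) \<Rightarrow> (nat \<Rightarrow> real) \<Rightarrow> real \<Rightarrow> real \<Rightarrow> (nat \<Rightarrow> nat) set" where
  "HHd k lam z R \<delta> = {r \<in> HH k lam R. \<forall>i<k.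
      \<bar>real (r i) - exp (alpha k lam z R * lam i) * z i\<bar>
        \<le> Lam k lam / lam i * max (real k) (\<delta> * sqrt (exp (alpha k lam z R * lam i) * z i))}"

end

theory Submission
  imports Defs
begin


lemma ln1p_lower:
  fixes x :: real assumes "0 \<le> x" shows "x - x^2/2 \<le> ln (1+x)"
proof -
  let ?f = "\<lambda>t::real. ln (1+t) - t + t^2/2"
  have "?f 0 \<le> ?f x"
  proof (rule DERIV_nonneg_imp_increasing_open[OF assms])
    fix t :: real assume t: "0 < t" "t < x"
    have "DERIV ?f t :> (1/(1+t) - 1 + t)"
      using t by (auto intro!: derivative_eq_intros)
    moreover have "1/(1+t) - 1 + t \<ge> 0"
      using t by (simp add: field_simps)
    ultimately show "\<exists>y. DERIV ?f t :> y \<and> y \<ge> 0" by blast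
  next
    show "continuous_on {0..x} ?f"
      by (intro continuous_intros) auto
  qed
  thus ?thesis by simp
qed

lemma ln1p_upper:
  fixes x :: real assumes "0 \<le> x" shows "ln (1+x) \<le> x - x^2/2 + x^3/3"
proof -
  let ?f = "\<lambda>t::real. t - t^2/2 + t^3/3 - ln (1+t)"
  have "?f 0 \<le> ?f x"
  proof (rule DERIV_nonneg_imp_increasing_open[OF assms])
    fix t :: real assume t: "0 < t" "t < x"
    have "DERIV ?f t :> (1 - t + t^2 - 1/(1+t))"
      using t by (auto intro!: derivative_eq_intros simp: power2_eq_square)
    moreover have "1 - t + t^2 - 1/(1+t) \<ge> 0"
    proof -
      have "1 - t + t^2 - 1/(1+t) = t^3/(1+t)" using t by (simp add: field_simps power2_eq_square power3_eq_cube)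
      thus ?thesis using t by simp
    qed
    ultimately show "\<exists>y. DERIV ?f t :> y \<and> y \<ge> 0" by blast
  next
    show "continuous_on {0..x} ?f"
      by (intro continuous_intros) auto
  qed
  thus ?thesis by simp
qed

lemma step_bound:
  fixes n :: real assumes n: "1 \<le> n"
  shows "\<bar>(n + 1/2) * ln (1 + 1/n) - 1\<bar> \<le> 1/(2*n*(n+1))"
proof -
  define x where "x = 1/n"
  have x0: "0 < x" and x1: "x \<le> 1" using n by (auto simp: x_def)
  have nx: "n = 1/x" using n by (simp add: x_def)
  have lo: "x - x^2/2 \<le> ln (1+x)" using ln1p_lower x0 by simp
  have up: "ln (1+x) \<le> x - x^2/2 + x^3/3" using ln1p_upper x0 by simp
  have e1: "(n + 1/2) * ln (1 + 1/n) - 1 \<ge> (1/x + 1/2) * (x - x^2/2) - 1"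
    using lo nx x0 by (simp add: x_def[symmetric] mult_left_mono)
  have e2: "(n + 1/2) * ln (1 + 1/n) - 1 \<le> (1/x + 1/2) * (x - x^2/2 + x^3/3) - 1"
    using up nx x0 by (simp add: x_def[symmetric] mult_left_mono)
  have a1: "(1/x + 1/2) * (x - x^2/2) - 1 = -(x^2/4)"
    using x0 by (simp add: field_simps power2_eq_square)
  have a2: "(1/x + 1/2) * (x - x^2/2 + x^3/3) - 1 = x^2/12 + x^3/6"
    using x0 by (simp add: field_simps power2_eq_square power3_eq_cube)
  have a3: "x^3/6 \<le> x^2/6" using x0 x1
    by (simp add: power2_eq_square power3_eq_cube mult_left_le_one_le)
  have a4: "x^2/4 \<le> 1/(2*n*(n+1))"
  proof -
    have "x^2/4 = 1/(4*n*n)" using n by (simp add: x_def power2_eq_square)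
    also have "\<dots> \<le> 1/(2*n*(n+1))" using n
      by (intro divide_left_mono) (auto simp: algebra_simps intro!: mult_pos_pos add_pos_pos)
    finally show ?thesis .
  qed
  have a5: "x^2/12 + x^3/6 \<le> x^2/4" using a3 by simp
  show ?thesis unfolding abs_le_iff using e1 e2 a1 a2 a5 a4 by argo
qed

lemma ln_fact_bounds:
  fixes m :: nat
  defines "n \<equiv> real (Suc m)"
  shows "(n + 1/2) * ln n - n + 1/2 + 1/(2*n) \<le> ln (fact (Suc m))
       \<and> ln (fact (Suc m)) \<le> (n + 1/2) * ln n - n + 3/2 - 1/(2*n)"
  unfolding n_def
proof (induction m)
  case 0
  then show ?case by simp
next
  case (Suc m)
  define n where "n = real (Suc m)"
  have n1: "1 \<le> n" by (simp add: n_def)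
  define L where "L = ln (1 + 1/n)"
  have Sn: "real (Suc (Suc m)) = n + 1" by (simp add: n_def)
  have lnS: "ln (n+1) = ln n + L"
  proof -
    have "n + 1 = n * (1 + 1/n)" using n1 by (simp add: field_simps)
    moreover have "1 + 1/n > 0" using n1 by (simp add: add_pos_pos)
    moreover have "ln (n * (1 + 1/n)) = ln n + ln (1 + 1/n)"
      using n1 \<open>1 + 1/n > 0\<close> by (simp add: ln_mult)
    ultimately show ?thesis unfolding L_def by simp
  qed
  have fS: "ln (fact (Suc (Suc m))) = ln (fact (Suc m)) + ln (n+1)"
  proof -
    have "(fact (Suc (Suc m)) :: real) = (n+1) * fact (Suc m)"
      by (simp add: n_def fact_Suc[of "Suc m"] algebra_simps)
    thus ?thesis by (simp add: ln_mult add.commute)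
  qed
  have sb: "\<bar>(n + 1/2) * L - 1\<bar> \<le> 1/(2*n*(n+1))" using step_bound[OF n1] by (simp add: L_def)
  have h: "1/(2*n) - 1/(2*(n+1)) = 1/(2*n*(n+1))" using n1 by (simp add: field_simps)
  have IH1: "(n + 1/2) * ln n - n + 1/2 + 1/(2*n) \<le> ln (fact (Suc m))"
    and IH2: "ln (fact (Suc m)) \<le> (n + 1/2) * ln n - n + 3/2 - 1/(2*n)"
    using Suc.IH by (simp_all add: n_def)
  have r1: "(n + 1 + 1/2) * (ln n + L) = (n + 1/2) * ln n + ln n + (n + 1/2) * L + L"
    by (simp add: algebra_simps)
  show ?case unfolding Sn fS lnS r1
    using IH1 IH2 sb h unfolding abs_le_iff by argo
qed
definition pp :: "real \<Rightarrow> nat \<Rightarrow> real" where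
  "pp w m = exp (- w) * w ^ m / fact m"

lemma pp_pos: "0 < w \<Longrightarrow> 0 < pp w m"
  by (simp add: pp_def)

lemma pp_nonneg: "0 \<le> w \<Longrightarrow> 0 \<le> pp w m"
  by (simp add: pp_def)

lemma pp_ln: assumes "0 < w" shows "pp w m = exp (- w + real m * ln w - ln (fact m))"
proof -
  have "w ^ m = exp (real m * ln w)" using assms by (simp add: exp_of_nat_mult)
  hence "pp w m = exp (- w) * exp (real m * ln w) / exp (ln (fact m))" unfolding pp_def by simp
  also have "\<dots> = exp (- w + real m * ln w - ln (fact m))"
    unfolding exp_diff exp_add by simp
  finally show ?thesis .
qed

lemma ln_fact_bounds':
  assumes "1 \<le> m"
  shows "(real m + 1/2) * ln (real m) - real m + 1/2 + 1/(2*real m) \<le> ln (fact m)"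
    and "ln (fact m) \<le> (real m + 1/2) * ln (real m) - real m + 3/2 - 1/(2*real m)"
proof -
  obtain m' where m: "m = Suc m'" using assms by (cases m) auto
  show "(real m + 1/2) * ln (real m) - real m + 1/2 + 1/(2*real m) \<le> ln (fact m)"
    using ln_fact_bounds[of m'] unfolding m by (simp add: Let_def)
  show "ln (fact m) \<le> (real m + 1/2) * ln (real m) - real m + 3/2 - 1/(2*real m)"
    using ln_fact_bounds[of m'] unfolding m by (simp add: Let_def)
qed

lemma sqrt_le_exp: "0 \<le> w \<Longrightarrow> sqrt w \<le> exp (w/4)"
proof -
  assume w: "0 \<le> w"
  have "(1 - sqrt w / 2)^2 \<ge> 0" by simp
  hence "sqrt w \<le> 1 + w/4" using w by (simp add: power2_eq_square algebra_simps)
  also have "\<dots> \<le> exp (w/4)" using exp_ge_add_one_self[of "w/4"] by simp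
  finally show ?thesis .
qed

lemma ln_le_div_e: "0 < (y::real) \<Longrightarrow> ln y \<le> y / exp 1"
proof -
  assume y: "0 < y"
  have "0 < y / exp 1" using y by simp
  hence "ln (y / exp 1) \<le> y / exp 1 - 1" by (rule ln_le_minus_one)
  moreover have "ln (y / exp 1) = ln y - 1" using y by (simp add: ln_div)
  ultimately show ?thesis by simp
qed

lemma pp_upper: assumes w: "0 < w" shows "pp w m \<le> 2 / sqrt w"
proof -
  have ew: "exp (- w/4) \<le> 2 / sqrt w"
  proof -
    have "sqrt w \<le> exp (w/4)" using sqrt_le_exp w by simp
    hence "exp (- w/4) * sqrt w \<le> 1" using w
      by (simp add: exp_minus field_simps)
    hence "exp (- w/4) \<le> 1 / sqrt w" using w by (simp add: field_simps)
    also have "\<dots> \<le> 2 / sqrt w" using w by (simp add: divide_right_mono)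
    finally show ?thesis .
  qed
  show ?thesis
  proof (cases "m = 0")
    case True
    hence "pp w m = exp (- w)" by (simp add: pp_def)
    also have "\<dots> \<le> exp (- w/4)" using w by simp
    finally show ?thesis using ew by simp
  next
    case False
    hence m1: "1 \<le> m" by simp
    define n where "n = real m"
    have n1: "1 \<le> n" using m1 by (simp add: n_def)
    have lf: "(n + 1/2) * ln n - n + 1/2 + 1/(2*n) \<le> ln (fact m)"
      using ln_fact_bounds'(1)[OF m1] by (simp add: n_def)
    have lnn: "0 \<le> ln n" using n1 by simp
    have lp: "ln (pp w m) \<le> - w + n * (ln w - ln n) + n - ln n / 2"
    proof -
      have "ln (pp w m) = - w + n * ln w - ln (fact m)" using pp_ln[OF w] by (simp add: n_def)
      moreover have "1/(2*n) \<ge> 0" using n1 by simp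
      moreover have "n * (ln w - ln n) = n * ln w - n * ln n" by (simp add: algebra_simps)
      ultimately show ?thesis using lf by argo
    qed
    have wn: "w / n > 0" using w n1 by simp
    have lq: "ln w - ln n = ln (w / n)" using w n1 by (simp add: ln_div)
    show ?thesis
    proof (cases "n \<ge> w/4")
      case True
      have "n * ln (w/n) \<le> n * (w/n - 1)" using wn n1 by (intro mult_left_mono ln_le_minus_one) auto
      also have "\<dots> = w - n" using n1 by (simp add: field_simps)
      finally have "ln (pp w m) \<le> - (ln n / 2)" using lp lq by simp
      hence "pp w m \<le> exp (- (ln n / 2))" using pp_pos[OF w] by (metis exp_ln exp_le_cancel_iff)
      also have "exp (- (ln n / 2)) = 1 / sqrt n"
      proof -
        have "exp (ln n / 2) = sqrt n" using n1 by (simp add: powr_half_sqrt[symmetric] powr_def)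
        thus ?thesis by (simp add: exp_minus inverse_eq_divide)
      qed
      also have "1 / sqrt n \<le> 2 / sqrt w"
      proof -
        have "sqrt w \<le> sqrt (4 * n)" using True by simp
        also have "sqrt (4 * n) = 2 * sqrt n" by (simp add: real_sqrt_mult)
        finally show ?thesis using n1 w by (simp add: field_simps)
      qed
      finally show ?thesis .
    next
      case False
      have e2: "exp 1 \<ge> (2::real)" using exp_ge_add_one_self[of 1] by simp
      have "n * ln (w/n) \<le> n * ((w/n) / exp 1)" using wn n1 by (intro mult_left_mono ln_le_div_e) auto
      also have "\<dots> = w / exp 1" using n1 by simp
      also have "\<dots> \<le> w / 2" using w e2 by (intro divide_left_mono) auto
      finally have "ln (pp w m) \<le> - w/4" using lp lq lnn False by simp
      hence "pp w m \<le> exp (- w/4)" using pp_pos[OF w] by (metis exp_ln exp_le_cancel_iff)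
      thus ?thesis using ew by simp
    qed
  qed
qed

lemma pp_lower: assumes w: "0 < w" and m1: "1 \<le> m"
  shows "exp (- 3/2 - (real m - w)^2 / w) / sqrt m \<le> pp w m"
proof -
  define n where "n = real m"
  have n1: "1 \<le> n" using m1 by (simp add: n_def)
  have lf: "ln (fact m) \<le> (n + 1/2) * ln n - n + 3/2 - 1/(2*n)"
    using ln_fact_bounds'(2)[OF m1] by (simp add: n_def)
  have "ln (pp w m) = - w + n * ln w - ln (fact m)" using pp_ln[OF w] by (simp add: n_def)
  moreover have "1/(2*n) \<ge> 0" using n1 by simp
  moreover have "n * (ln n - ln w) = n * ln n - n * ln w" by (simp add: algebra_simps)
  ultimately have lp: "ln (pp w m) \<ge> - w - n * (ln n - ln w) + n - 3/2 - ln n / 2"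
    using lf by argo
  have nw: "n / w > 0" using w n1 by simp
  have "n * (ln n - ln w) = n * ln (n/w)" using w n1 by (simp add: ln_div)
  also have "\<dots> \<le> n * (n/w - 1)" using nw n1 by (intro mult_left_mono ln_le_minus_one) auto
  finally have "ln (pp w m) \<ge> - 3/2 - (n - w)^2/w - ln n / 2"
  proof -
    assume a: "n * (ln n - ln w) \<le> n * (n / w - 1)"
    have "- w - n * (n / w - 1) + n = -((n - w)^2 / w)" using w by (simp add: field_simps power2_eq_square)
    thus ?thesis using a lp by simp
  qed
  hence "exp (- 3/2 - (n - w)^2/w - ln n / 2) \<le> pp w m"
    using pp_pos[OF w] by (metis exp_ln exp_le_cancel_iff)
  moreover have "exp (- 3/2 - (n - w)^2/w - ln n / 2) = exp (- 3/2 - (n - w)^2/w) / sqrt n"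
  proof -
    have "exp (ln n / 2) = sqrt n" using n1 by (simp add: powr_half_sqrt[symmetric] powr_def)
    thus ?thesis by (simp add: exp_diff)
  qed
  ultimately show ?thesis by (simp add: n_def)
qed
lemma pp_sum_le1: assumes w: "0 \<le> w" and M: "finite M" shows "(\<Sum>m\<in>M. pp w m) \<le> 1"
proof -
  have sm: "(\<lambda>n. w ^ n / fact n) sums exp w"
    using exp_converges[of w] by (simp add: scaleR_conv_of_real divide_inverse mult.commute)
  have "(\<Sum>m\<in>M. w ^ m / fact m) \<le> (\<Sum>n. w ^ n / fact n)"
    using sm w M by (intro sum_le_suminf) (auto simp: sums_iff)
  also have "\<dots> = exp w" using sm by (simp add: sums_iff)
  finally have "(\<Sum>m\<in>M. w ^ m / fact m) \<le> exp w" .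
  hence "exp (- w) * (\<Sum>m\<in>M. w ^ m / fact m) \<le> exp (- w) * exp w"
    by (intro mult_left_mono) auto
  thus ?thesis by (simp add: pp_def sum_distrib_left exp_minus_inverse mult.commute[of "exp (-w)"] exp_minus)
qed

definition Box :: "nat set \<Rightarrow> (nat \<Rightarrow> nat set) \<Rightarrow> (nat \<Rightarrow> nat) set" where
  "Box I A = {s. (\<forall>i\<in>I. s i \<in> A i) \<and> (\<forall>i. i \<notin> I \<longrightarrow> s i = 0)}"

lemma finite_Box: assumes "finite I" "\<forall>i\<in>I. finite (A i)" shows "finite (Box I A)"
proof -
  have "Box I A \<subseteq> {f. \<forall>x. (x \<in> I \<longrightarrow> f x \<in> \<Union>(A ` I)) \<and> (x \<notin> I \<longrightarrow> f x = 0)}"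
    unfolding Box_def by auto
  moreover have "finite {f. \<forall>x. (x \<in> I \<longrightarrow> f x \<in> \<Union>(A ` I)) \<and> (x \<notin> I \<longrightarrow> f x = (0::nat))}"
    using assms by (intro finite_set_of_finite_funs) auto
  ultimately show ?thesis by (rule finite_subset)
qed

lemma Box_insert:
  assumes "a \<notin> I"
  shows "Box (insert a I) A = (\<lambda>(m,t). t(a:=m)) ` (A a \<times> Box I A)"
proof
  show "Box (insert a I) A \<subseteq> (\<lambda>(m,t). t(a:=m)) ` (A a \<times> Box I A)"
  proof
    fix s assume s: "s \<in> Box (insert a I) A"
    have "s = (\<lambda>(m,t). t(a:=m)) (s a, s(a:=0))" by simp
    moreover have "(s a, s(a:=0)) \<in> A a \<times> Box I A" using s assms unfolding Box_def by auto
    ultimately show "s \<in> (\<lambda>(m,t). t(a:=m)) ` (A a \<times> Box I A)" by blast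
  qed
  show "(\<lambda>(m,t). t(a:=m)) ` (A a \<times> Box I A) \<subseteq> Box (insert a I) A"
    using assms unfolding Box_def by auto
qed

lemma sum_prod_Box:
  fixes g :: "nat \<Rightarrow> nat \<Rightarrow> real"
  assumes "finite I" "\<forall>i\<in>I. finite (A i)"
  shows "(\<Sum>s\<in>Box I A. \<Prod>i\<in>I. g i (s i)) = (\<Prod>i\<in>I. \<Sum>m\<in>A i. g i m)"
  using assms
proof (induction I rule: finite_induct)
  case empty
  have "Box {} A = {\<lambda>_. 0}" unfolding Box_def by auto
  then show ?case by simp
next
  case (insert a I)
  have fB: "finite (Box I A)" using insert by (intro finite_Box) auto
  have inj: "inj_on (\<lambda>(m,t). t(a:=m)) (A a \<times> Box I A)"
  proof (rule inj_onI, clarsimp)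
    fix m t m' t' assume "t \<in> Box I A" "t' \<in> Box I A" "t(a := m) = t'(a := m')"
    moreover have "t a = 0" "t' a = 0" using calculation insert.hyps unfolding Box_def by auto
    ultimately show "m = m' \<and> t = t'"
    proof -
      assume e: "t(a := m) = t'(a := m')" and z: "t a = 0" "t' a = 0"
      have "m = m'" using fun_cong[OF e, of a] by simp
      moreover have "t = t'"
      proof
        fix i show "t i = t' i" using fun_cong[OF e, of i] z by (cases "i = a") auto
      qed
      ultimately show ?thesis by simp
    qed
  qed
  have "(\<Sum>s\<in>Box (insert a I) A. \<Prod>i\<in>insert a I. g i (s i))
      = (\<Sum>(m,t)\<in>A a \<times> Box I A. \<Prod>i\<in>insert a I. g i ((t(a:=m)) i))"
    unfolding Box_insert[OF insert.hyps(2)] by (subst sum.reindex[OF inj]) (simp add: case_prod_unfold)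
  also have "\<dots> = (\<Sum>(m,t)\<in>A a \<times> Box I A. g a m * (\<Prod>i\<in>I. g i (t i)))"
  proof -
    have "(\<Prod>i\<in>insert a I. g i ((t(a:=m)) i)) = g a m * (\<Prod>i\<in>I. g i (t i))" for m t
    proof -
      have "(\<Prod>i\<in>I. g i ((t(a:=m)) i)) = (\<Prod>i\<in>I. g i (t i))"
        using insert.hyps by (intro prod.cong) auto
      thus ?thesis using insert.hyps by simp
    qed
    thus ?thesis by simp
  qed
  also have "\<dots> = (\<Sum>m\<in>A a. g a m) * (\<Sum>t\<in>Box I A. \<Prod>i\<in>I. g i (t i))"
    by (simp add: sum_product sum.cartesian_product)
  also have "\<dots> = (\<Prod>i\<in>insert a I. \<Sum>m\<in>A i. g i m)"
    using insert by simp
  finally show ?case .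
qed

lemma mass_le1:
  fixes w :: "nat \<Rightarrow> real"
  assumes "finite I" "finite S" "\<forall>s\<in>S. \<forall>i. i \<notin> I \<longrightarrow> s i = 0" "\<forall>i\<in>I. 0 \<le> w i"
  shows "(\<Sum>s\<in>S. \<Prod>i\<in>I. pp (w i) (s i)) \<le> 1"
  using assms
proof (induction I arbitrary: S rule: finite_induct)
  case empty
  have "S \<subseteq> {\<lambda>_. 0}" using empty by auto
  hence "S = {} \<or> S = {\<lambda>_. 0}" by blast
  thus ?case by auto
next
  case (insert a I)
  define \<pi> where "\<pi> = (\<lambda>s::nat\<Rightarrow>nat. s(a:=0))"
  have "(\<Sum>s\<in>S. \<Prod>i\<in>insert a I. pp (w i) (s i)) = (\<Sum>s\<in>S. pp (w a) (s a) * (\<Prod>i\<in>I. pp (w i) (\<pi> s i)))"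
  proof (rule sum.cong[OF refl])
    fix s assume "s \<in> S"
    have "(\<Prod>i\<in>I. pp (w i) (\<pi> s i)) = (\<Prod>i\<in>I. pp (w i) (s i))"
      using insert.hyps by (intro prod.cong) (auto simp: \<pi>_def)
    thus "(\<Prod>i\<in>insert a I. pp (w i) (s i)) = pp (w a) (s a) * (\<Prod>i\<in>I. pp (w i) (\<pi> s i))"
      using insert.hyps by simp
  qed
  also have "\<dots> = (\<Sum>t\<in>\<pi> ` S. \<Sum>s\<in>{s\<in>S. \<pi> s = t}. pp (w a) (s a) * (\<Prod>i\<in>I. pp (w i) (\<pi> s i)))"
    by (rule sum.image_gen[where g=\<pi>, OF insert.prems(1)])
  also have "\<dots> = (\<Sum>t\<in>\<pi> ` S. (\<Prod>i\<in>I. pp (w i) (t i)) * (\<Sum>s\<in>{s\<in>S. \<pi> s = t}. pp (w a) (s a)))"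
    by (simp add: sum_distrib_left mult.commute)
  also have "\<dots> \<le> (\<Sum>t\<in>\<pi> ` S. (\<Prod>i\<in>I. pp (w i) (t i)) * 1)"
  proof (intro sum_mono mult_left_mono)
    fix t assume "t \<in> \<pi> ` S"
    have inj: "inj_on (\<lambda>s. s a) {s\<in>S. \<pi> s = t}"
    proof (rule inj_onI)
      fix s s' assume "s \<in> {s\<in>S. \<pi> s = t}" "s' \<in> {s\<in>S. \<pi> s = t}" "s a = s' a"
      hence e: "s(a:=0) = s'(a:=0)" "s a = s' a" unfolding \<pi>_def by auto
      show "s = s'"
      proof
        fix i show "s i = s' i" using fun_cong[OF e(1), of i] e(2) by (cases "i = a") auto
      qed
    qed
    have "(\<Sum>s\<in>{s\<in>S. \<pi> s = t}. pp (w a) (s a)) = (\<Sum>m\<in>(\<lambda>s. s a) ` {s\<in>S. \<pi> s = t}. pp (w a) m)"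
      by (simp add: sum.reindex[OF inj])
    also have "\<dots> \<le> 1" using insert.prems by (intro pp_sum_le1) auto
    finally show "(\<Sum>s\<in>{s\<in>S. \<pi> s = t}. pp (w a) (s a)) \<le> 1" .
    show "0 \<le> (\<Prod>i\<in>I. pp (w i) (t i))" using insert.prems by (intro prod_nonneg pp_nonneg) auto
  qed
  also have "\<dots> \<le> 1"
  proof -
    have "\<forall>s\<in>\<pi> ` S. \<forall>i. i \<notin> I \<longrightarrow> s i = 0" using insert.prems unfolding \<pi>_def by auto
    hence "(\<Sum>t\<in>\<pi> ` S. (\<Prod>i\<in>I. pp (w i) (t i))) \<le> 1"
      using insert.IH[of "\<pi> ` S"] insert.prems by auto
    thus ?thesis by simp
  qed
  finally show ?case .
qed


definition Lmin :: "nat \<Rightarrow> (nat \<Rightarrow> real) \<Rightarrow> real" where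
  "Lmin k lam = Min (lam ` {..<k})"

lemma Lam_props:
  assumes k: "k \<ge> 1" and lam: "\<forall>i<k. lam i > 0"
  shows "\<forall>i<k. lam i \<le> Lam k lam" "\<forall>i<k. Lmin k lam \<le> lam i" "0 < Lmin k lam" "Lmin k lam \<le> Lam k lam" "0 < Lam k lam"
proof -
  have "0 \<in> {..<k}" using k by simp
  hence ne: "lam ` {..<k} \<noteq> {}" by blast
  show 1: "\<forall>i<k. lam i \<le> Lam k lam" unfolding Lam_def by auto
  show 2: "\<forall>i<k. Lmin k lam \<le> lam i" unfolding Lmin_def by auto
  have "Lmin k lam \<in> lam ` {..<k}" unfolding Lmin_def using ne by (intro Min_in) auto
  thus 3: "0 < Lmin k lam" using lam by auto
  have "0 < k" using k by simp
  show "Lmin k lam \<le> Lam k lam" using 1 2 \<open>0 < k\<close> by (meson order_trans)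
  thus "0 < Lam k lam" using 3 by linarith
qed

lemma finite_HH:
  assumes k: "k \<ge> 1" and lam: "\<forall>i<k. lam i > 0"
  shows "finite (HH k lam R)"
proof -
  note L = Lam_props[OF k lam]
  define N where "N = nat \<lceil>R / Lmin k lam\<rceil>"
  have "HH k lam R \<subseteq> Box {..<k} (\<lambda>_. {..N})"
  proof
    fix r assume r: "r \<in> HH k lam R"
    have "r i \<le> N" if i: "i < k" for i
    proof -
      have "lam i * real (r i) \<le> (\<Sum>i<k. lam i * real (r i))"
        using i lam by (intro member_le_sum) auto
      also have "\<dots> \<le> R" using r unfolding HH_def by auto
      finally have "lam i * real (r i) \<le> R" .
      moreover have "Lmin k lam * real (r i) \<le> lam i * real (r i)" using L i by (intro mult_right_mono) auto
      ultimately have "Lmin k lam * real (r i) \<le> R" by linarith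
      hence "real (r i) \<le> R / Lmin k lam" using L by (simp add: field_simps)
      hence "real (r i) \<le> real_of_int \<lceil>R / Lmin k lam\<rceil>" by (meson le_of_int_ceiling order_trans)
      thus ?thesis unfolding N_def by linarith
    qed
    thus "r \<in> Box {..<k} (\<lambda>_. {..N})" using r unfolding Box_def HH_def by auto
  qed
  moreover have "finite (Box {..<k} (\<lambda>_. {..N}))" by (intro finite_Box) auto
  ultimately show ?thesis by (rule finite_subset)
qed

lemma fiber_card:
  fixes F :: "(nat \<Rightarrow> nat) set" and l L :: real
  assumes fin: "finite F" and l: "0 < l" and L: "0 \<le> L"
    and agree: "\<forall>r\<in>F. \<forall>r'\<in>F. \<forall>i. i \<noteq> j \<longrightarrow> r i = r' i"
    and close: "\<forall>r\<in>F. \<forall>r'\<in>F. l * (real (r j) - real (r' j)) < L"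
  shows "real (card F) \<le> L / l + 1"
proof (cases "F = {}")
  case True
  have "0 \<le> L / l" using l L by simp
  thus ?thesis using True by simp
next
  case False
  define V where "V = (\<lambda>r. r j) ` F"
  have inj: "inj_on (\<lambda>r. r j) F"
  proof (rule inj_onI)
    fix r r' assume "r \<in> F" "r' \<in> F" "r j = r' j"
    show "r = r'"
    proof
      fix i show "r i = r' i" using agree \<open>r \<in> F\<close> \<open>r' \<in> F\<close> \<open>r j = r' j\<close> by (cases "i = j") auto
    qed
  qed
  have cF: "card F = card V" unfolding V_def using card_image[OF inj] by simp
  have fV: "finite V" "V \<noteq> {}" using fin False by (auto simp: V_def)
  define m0 where "m0 = Min V"
  define q where "q = nat \<lfloor>L / l\<rfloor>"
  have "V \<subseteq> {m0..m0+q}"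
  proof
    fix m assume m: "m \<in> V"
    have ge: "m0 \<le> m" using fV m unfolding m0_def by auto
    have "m0 \<in> V" using fV unfolding m0_def by (intro Min_in) auto
    then obtain r' where r': "r' \<in> F" "m0 = r' j" unfolding V_def by auto
    obtain r where r: "r \<in> F" "m = r j" using m unfolding V_def by auto
    have "l * (real m - real m0) < L" using close r r' by auto
    hence "real m - real m0 < L / l" using l by (simp add: field_simps)
    hence "real (m - m0) \<le> L / l" using ge by (simp add: of_nat_diff)
    hence "int (m - m0) \<le> \<lfloor>L / l\<rfloor>" by (simp add: le_floor_iff)
    hence "m - m0 \<le> q" unfolding q_def by linarith
    thus "m \<in> {m0..m0+q}" using ge by simp
  qed
  hence "card V \<le> card {m0..m0+q}" by (intro card_mono) auto
  hence "card F \<le> q + 1" using cF by simp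
  hence "real (card F) \<le> real (q + 1)" by (simp only: of_nat_le_iff)
  hence "real (card F) \<le> real q + 1" by simp
  moreover have "real q \<le> L / l" unfolding q_def using l L by simp
  ultimately show ?thesis by linarith
qed

lemma argmax_obtain:
  fixes w :: "nat \<Rightarrow> real"
  assumes "k \<ge> 1"
  obtains j where "j < k" "\<forall>i<k. w i \<le> w j"
proof -
  have "0 \<in> {..<k}" using assms by simp
  hence ne: "w ` {..<k} \<noteq> {}" by blast
  have "Max (w ` {..<k}) \<in> w ` {..<k}" using ne by (intro Max_in) auto
  then obtain j where j: "j < k" "w j = Max (w ` {..<k})" by auto
  have "\<forall>i<k. w i \<le> w j" using j(2) by auto
  thus ?thesis using that j(1) by blast
qed

lemma sum_split_j:
  fixes f :: "nat \<Rightarrow> 'a::comm_monoid_add"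
  assumes "j < k"
  shows "(\<Sum>i<k. f i) = f j + (\<Sum>i\<in>{..<k} - {j}. f i)"
  using assms by (simp add: sum.remove)

lemma prod_split_j:
  fixes f :: "nat \<Rightarrow> 'a::comm_monoid_mult"
  assumes "j < k"
  shows "(\<Prod>i<k. f i) = f j * (\<Prod>i\<in>{..<k} - {j}. f i)"
  using assms by (simp add: prod.remove)

lemma partB_w:
  fixes lam w :: "nat \<Rightarrow> real"
  assumes k: "k \<ge> 1" and lam: "\<forall>i<k. lam i > 0" and w: "\<forall>i<k. w i > 0"
    and sw: "(\<Sum>i<k. lam i * w i) = R" and R: "Lam k lam \<le> R"
  shows "(\<Sum>r\<in>HH k lam R. \<Prod>i<k. pp (w i) (r i))
           \<le> 2 * (Lam k lam / Lmin k lam + 1) * sqrt (real k * Lam k lam) / sqrt R"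
proof -
  note L = Lam_props[OF k lam]
  define \<Lambda> where "\<Lambda> = Lam k lam"
  obtain j where j: "j < k" "\<forall>i<k. w i \<le> w j" using argmax_obtain[OF k] by blast
  have wj: "0 < w j" using w j by auto
  have Rle: "R \<le> real k * \<Lambda> * w j"
  proof -
    have "R = (\<Sum>i<k. lam i * w i)" using sw by simp
    also have "\<dots> \<le> (\<Sum>i<k. \<Lambda> * w j)"
      using L j w lam unfolding \<Lambda>_def by (intro sum_mono mult_mono) (auto simp: less_imp_le)
    also have "\<dots> = real k * \<Lambda> * w j" by simp
    finally show ?thesis .
  qed
  have Rpos: "0 < R" using R L by linarith
  define I where "I = {..<k} - {j}"
  define \<pi> where "\<pi> = (\<lambda>r::nat\<Rightarrow>nat. r(j:=0))"
  define H where "H = HH k lam R"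
  have finH: "finite H" unfolding H_def by (rule finite_HH[OF k lam])
  define B where "B = (\<Lambda> / Lmin k lam + 1) * (2 / sqrt (w j))"
  have "(\<Sum>r\<in>H. \<Prod>i<k. pp (w i) (r i)) = (\<Sum>r\<in>H. pp (w j) (r j) * (\<Prod>i\<in>I. pp (w i) (\<pi> r i)))"
  proof (rule sum.cong[OF refl])
    fix r assume "r \<in> H"
    have "(\<Prod>i\<in>I. pp (w i) (\<pi> r i)) = (\<Prod>i\<in>I. pp (w i) (r i))"
      by (intro prod.cong) (auto simp: \<pi>_def I_def)
    thus "(\<Prod>i<k. pp (w i) (r i)) = pp (w j) (r j) * (\<Prod>i\<in>I. pp (w i) (\<pi> r i))"
      using prod_split_j[OF j(1)] unfolding I_def by simp
  qed
  also have "\<dots> = (\<Sum>t\<in>\<pi> ` H. \<Sum>r\<in>{r\<in>H. \<pi> r = t}. pp (w j) (r j) * (\<Prod>i\<in>I. pp (w i) (\<pi> r i)))"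
    by (rule sum.image_gen[where g=\<pi>, OF finH])
  also have "\<dots> = (\<Sum>t\<in>\<pi> ` H. (\<Prod>i\<in>I. pp (w i) (t i)) * (\<Sum>r\<in>{r\<in>H. \<pi> r = t}. pp (w j) (r j)))"
    by (simp add: sum_distrib_left mult.commute)
  also have "\<dots> \<le> (\<Sum>t\<in>\<pi> ` H. (\<Prod>i\<in>I. pp (w i) (t i)) * B)"
  proof (intro sum_mono mult_left_mono)
    fix t assume "t \<in> \<pi> ` H"
    define F where "F = {r\<in>H. \<pi> r = t}"
    have finF: "finite F" using finH unfolding F_def by simp
    have agree: "\<forall>r\<in>F. \<forall>r'\<in>F. \<forall>i. i \<noteq> j \<longrightarrow> r i = r' i"
    proof (intro ballI allI impI)
      fix r r' i assume "r \<in> F" "r' \<in> F" "i \<noteq> j"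
      hence "\<pi> r i = \<pi> r' i" unfolding F_def by simp
      thus "r i = r' i" using \<open>i \<noteq> j\<close> unfolding \<pi>_def by simp
    qed
    have close: "\<forall>r\<in>F. \<forall>r'\<in>F. lam j * (real (r j) - real (r' j)) < \<Lambda>"
    proof (intro ballI)
      fix r r' assume r: "r \<in> F" and r': "r' \<in> F"
      have eq: "(\<Sum>i\<in>I. lam i * real (r i)) = (\<Sum>i\<in>I. lam i * real (r' i))"
        using agree r r' by (intro sum.cong) (auto simp: I_def)
      have s1: "(\<Sum>i<k. lam i * real (r i)) = lam j * real (r j) + (\<Sum>i\<in>I. lam i * real (r i))"
        using sum_split_j[OF j(1), of "\<lambda>i. lam i * real (r i)"] unfolding I_def by simp
      have s2: "(\<Sum>i<k. lam i * real (r' i)) = lam j * real (r' j) + (\<Sum>i\<in>I. lam i * real (r' i))"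
        using sum_split_j[OF j(1), of "\<lambda>i. lam i * real (r' i)"] unfolding I_def by simp
      have h1: "(\<Sum>i<k. lam i * real (r i)) \<le> R" and h2: "R - \<Lambda> < (\<Sum>i<k. lam i * real (r' i))"
        using r r' unfolding F_def H_def HH_def \<Lambda>_def by auto
      show "lam j * (real (r j) - real (r' j)) < \<Lambda>"
        using s1 s2 eq h1 h2 by (simp add: algebra_simps)
    qed
    have "real (card F) \<le> \<Lambda> / lam j + 1"
      by (rule fiber_card[OF finF _ _ agree close]) (use L j lam \<Lambda>_def in auto)
    also have "\<dots> \<le> \<Lambda> / Lmin k lam + 1"
      using L j lam unfolding \<Lambda>_def by (intro add_right_mono divide_left_mono) auto
    finally have cF: "real (card F) \<le> \<Lambda> / Lmin k lam + 1" .
    have "(\<Sum>r\<in>F. pp (w j) (r j)) \<le> real (card F) * (2 / sqrt (w j))"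
      using pp_upper[OF wj] by (intro sum_bounded_above) auto
    also have "\<dots> \<le> (\<Lambda> / Lmin k lam + 1) * (2 / sqrt (w j))"
      using cF wj by (intro mult_right_mono) auto
    finally show "(\<Sum>r\<in>{r\<in>H. \<pi> r = t}. pp (w j) (r j)) \<le> B" unfolding F_def B_def .
    show "0 \<le> (\<Prod>i\<in>I. pp (w i) (t i))" using w by (intro prod_nonneg pp_nonneg) (auto simp: I_def less_imp_le)
  qed
  also have "\<dots> = (\<Sum>t\<in>\<pi> ` H. (\<Prod>i\<in>I. pp (w i) (t i))) * B" by (simp add: sum_distrib_right)
  also have "\<dots> \<le> 1 * B"
  proof (rule mult_right_mono)
    show "0 \<le> B" unfolding B_def using L wj by (intro mult_nonneg_nonneg add_nonneg_nonneg) (auto simp: \<Lambda>_def)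
    show "(\<Sum>t\<in>\<pi> ` H. (\<Prod>i\<in>I. pp (w i) (t i))) \<le> 1"
    proof (rule mass_le1)
      show "finite I" unfolding I_def by simp
      show "finite (\<pi> ` H)" using finH by simp
      show "\<forall>s\<in>\<pi> ` H. \<forall>i. i \<notin> I \<longrightarrow> s i = 0"
        unfolding I_def \<pi>_def H_def HH_def by auto
      show "\<forall>i\<in>I. 0 \<le> w i" using w unfolding I_def by (auto simp: less_imp_le)
    qed
  qed
  also have "\<dots> \<le> 2 * (\<Lambda> / Lmin k lam + 1) * sqrt (real k * \<Lambda>) / sqrt R"
  proof -
    have "sqrt R \<le> sqrt (real k * \<Lambda>) * sqrt (w j)"
      using Rle by (simp add: real_sqrt_mult[symmetric])
    hence "1 / sqrt (w j) \<le> sqrt (real k * \<Lambda>) / sqrt R"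
      using wj Rpos by (simp add: field_simps)
    moreover have "0 \<le> 2 * (\<Lambda> / Lmin k lam + 1)" using L by (simp add: \<Lambda>_def)
    ultimately have "2 * (\<Lambda> / Lmin k lam + 1) * (1 / sqrt (w j)) \<le> 2 * (\<Lambda> / Lmin k lam + 1) * (sqrt (real k * \<Lambda>) / sqrt R)"
      by (rule mult_left_mono)
    moreover have "1 * B = 2 * (\<Lambda> / Lmin k lam + 1) * (1 / sqrt (w j))" unfolding B_def by simp
    ultimately show ?thesis by simp
  qed
  finally show ?thesis unfolding H_def \<Lambda>_def .
qed


lemma finite_window: "finite {m::nat. x \<le> real m \<and> real m \<le> w}"
proof -
  have "{m::nat. x \<le> real m \<and> real m \<le> w} \<subseteq> {..nat \<lceil>w\<rceil>}"
  proof
    fix m assume "m \<in> {m::nat. x \<le> real m \<and> real m \<le> w}"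
    hence "real m \<le> w" by simp
    hence "real m \<le> real_of_int \<lceil>w\<rceil>" by (meson le_of_int_ceiling order_trans)
    thus "m \<in> {..nat \<lceil>w\<rceil>}" by simp
  qed
  thus ?thesis by (rule finite_subset) simp
qed

lemma LB_window:
  assumes w: "0 < w" and a1: "1 \<le> a" and a2: "a \<le> max 1 (sqrt w)"
  shows "exp (-5/2) * a / (2 * max 1 (sqrt w)) \<le> (\<Sum>m\<in>{m::nat. w - a \<le> real m \<and> real m \<le> w}. pp w m)"
proof -
  define W where "W = {m::nat. w - a \<le> real m \<and> real m \<le> w}"
  have finW: "finite W" unfolding W_def by (rule finite_window)
  have nn: "\<forall>m\<in>W. 0 \<le> pp w m" using w by (auto intro: pp_nonneg)
  show ?thesis
  proof (cases "w \<le> 1")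
    case True
    have m1: "max 1 (sqrt w) = 1" using True w by simp
    hence a: "a = 1" using a1 a2 by simp
    have "0 \<in> W" unfolding W_def using True a w by simp
    hence "pp w 0 \<le> (\<Sum>m\<in>W. pp w m)" using finW nn by (intro member_le_sum) auto
    moreover have "pp w 0 = exp (- w)" by (simp add: pp_def)
    moreover have "exp (-5/2) * a / (2 * max 1 (sqrt w)) \<le> exp (- w)"
    proof -
      have "exp (-5/2) \<le> exp (- w)" using True by simp
      moreover have "exp (-5/2) * a / (2 * max 1 (sqrt w)) = exp (-5/2) / 2" using m1 a by simp
      moreover have "exp (-5/2::real) / 2 \<le> exp (-5/2)" by simp
      ultimately show ?thesis by linarith
    qed
    ultimately show ?thesis unfolding W_def by simp
  next
    case False
    hence w1: "1 < w" by simp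
    have sw1: "1 < sqrt w" using w1 by simp
    have m1: "max 1 (sqrt w) = sqrt w" using sw1 by simp
    have asw: "a \<le> sqrt w" using a2 m1 by simp
    have swl: "sqrt w \<le> w"
    proof -
      have "sqrt w * 1 \<le> sqrt w * sqrt w" using sw1 by (intro mult_left_mono) auto
      thus ?thesis using w by simp
    qed
    have a2w: "a^2 \<le> w"
    proof -
      have "a^2 \<le> (sqrt w)^2" using asw a1 by (intro power_mono) auto
      thus ?thesis using w by simp
    qed
    define q where "q = nat \<lfloor>a\<rfloor>"
    define fw where "fw = nat \<lfloor>w\<rfloor>"
    have q1: "1 \<le> q" using a1 unfolding q_def by linarith
    have qa: "real q \<le> a" using a1 unfolding q_def by linarith
    have qa2: "a / 2 \<le> real q"
    proof -
      have f1: "1 \<le> \<lfloor>a\<rfloor>" using a1 by linarith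
      have f2: "a - 1 < real_of_int \<lfloor>a\<rfloor>" by linarith
      have "real q = real_of_int \<lfloor>a\<rfloor>" unfolding q_def using f1 by simp
      thus ?thesis using f1 f2 by linarith
    qed
    have qfw: "q \<le> fw" using asw swl a1 unfolding q_def fw_def by (intro nat_mono floor_mono) linarith
    have fww: "real fw \<le> w" "w < real fw + 1" using w unfolding fw_def by linarith+
    define F where "F = {fw + 1 - q..fw}"
    have cardF: "card F = q" unfolding F_def using qfw q1 by simp
    have FW: "F \<subseteq> W"
    proof
      fix m assume "m \<in> F"
      hence m: "fw + 1 - q \<le> m" "m \<le> fw" unfolding F_def by auto
      have "real (fw + 1 - q) = real fw + 1 - real q" using qfw by (simp add: of_nat_diff)
      hence "w - a \<le> real m" using m(1) fww qa by (smt (verit) of_nat_le_iff)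
      moreover have "real m \<le> w" using m(2) fww by (smt (verit) of_nat_le_iff)
      ultimately show "m \<in> W" unfolding W_def by simp
    qed
    have pb: "exp (-5/2) / sqrt w \<le> pp w m" if mF: "m \<in> F" for m
    proof -
      have mW: "m \<in> W" using mF FW by auto
      have m1: "1 \<le> m" using mF qfw unfolding F_def by auto
      have dev: "\<bar>real m - w\<bar> \<le> a" using mW unfolding W_def by auto
      have "\<bar>real m - w\<bar>^2 \<le> a^2" using dev by (intro power_mono) auto
      hence "(real m - w)^2 \<le> a^2" by simp
      hence "(real m - w)^2 / w \<le> 1" using a2w w by (simp add: divide_le_eq)
      hence "exp (-5/2) \<le> exp (- 3/2 - (real m - w)^2 / w)" by simp
      moreover have "sqrt (real m) \<le> sqrt w" using mW unfolding W_def by simp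
      moreover have "0 < sqrt (real m)" using m1 by simp
      ultimately have "exp (-5/2) / sqrt w \<le> exp (- 3/2 - (real m - w)^2 / w) / sqrt (real m)"
        by (intro frac_le) auto
      also have "\<dots> \<le> pp w m" by (rule pp_lower[OF w m1])
      finally show ?thesis .
    qed
    have "exp (-5/2) * a / (2 * max 1 (sqrt w)) = (a/2) * (exp (-5/2) / sqrt w)" using m1 by simp
    also have "\<dots> \<le> real q * (exp (-5/2) / sqrt w)" using qa2 w by (intro mult_right_mono) auto
    also have "\<dots> = (\<Sum>m\<in>F. exp (-5/2) / sqrt w)" using cardF by simp
    also have "\<dots> \<le> (\<Sum>m\<in>F. pp w m)" using pb by (intro sum_mono) auto
    also have "\<dots> \<le> (\<Sum>m\<in>W. pp w m)" using FW finW nn by (intro sum_mono2) auto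
    finally show ?thesis unfolding W_def .
  qed
qed


lemma max_sqrt_sq: "0 \<le> w \<Longrightarrow> (max 1 (sqrt w))^2 = max 1 w"
  by (cases "w \<le> 1") (auto simp: max_def)

lemma LB_point:
  assumes w0: "0 < w0" "w0 \<le> w" and D: "1 \<le> D" and dev: "\<bar>real m - w\<bar> \<le> D * max 1 (sqrt w)"
  shows "exp (- 3/2 - D^2 * (1 + 1/w0)) / sqrt (1 + D) / max 1 (sqrt w) \<le> pp w m"
proof -
  have w: "0 < w" using w0 by linarith
  define M where "M = max 1 (sqrt w)"
  have M1: "1 \<le> M" unfolding M_def by simp
  have M2: "M^2 = max 1 w" unfolding M_def using w by (simp add: max_sqrt_sq)
  define \<kappa> where "\<kappa> = exp (- 3/2 - D^2 * (1 + 1/w0)) / sqrt (1 + D)"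
  have sD: "1 \<le> sqrt (1 + D)" using D by simp
  have kpos: "0 \<le> \<kappa>" unfolding \<kappa>_def using D by (intro divide_nonneg_nonneg) auto
  have "\<kappa> / M \<le> pp w m"
  proof (cases "m = 0")
    case True
    have "w \<le> D^2"
    proof (cases "w \<le> 1")
      case True thus ?thesis using D by (smt (verit) one_le_power)
    next
      case False
      hence "M = sqrt w" unfolding M_def by simp
      hence "w \<le> D * sqrt w" using dev \<open>m = 0\<close> w unfolding M_def by simp
      hence "sqrt w * sqrt w \<le> D * sqrt w" using w by simp
      moreover have "0 < sqrt w" using w by simp
      ultimately have "sqrt w \<le> D" by (rule mult_right_le_imp_le)
      hence "(sqrt w)^2 \<le> D^2" using w by (intro power_mono) auto
      thus ?thesis using w by simp
    qed
    have "\<kappa> / M \<le> \<kappa>" using M1 kpos by (simp add: divide_le_eq mult_le_cancel_left1 mult_left_le)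
    also have "\<kappa> \<le> exp (- 3/2 - D^2 * (1 + 1/w0))" unfolding \<kappa>_def using sD by (simp add: divide_le_eq mult_le_cancel_left1)
    also have "\<dots> \<le> exp (- w)"
    proof -
      have "D^2 \<le> D^2 * (1 + 1/w0)" using w0 by (simp add: mult_le_cancel_left1)
      thus ?thesis using \<open>w \<le> D^2\<close> by simp
    qed
    also have "exp (- w) = pp w m" using True by (simp add: pp_def)
    finally show ?thesis .
  next
    case False
    hence m1: "1 \<le> m" by simp
    have sq: "(real m - w)^2 \<le> D^2 * max 1 w"
    proof -
      have "\<bar>real m - w\<bar>^2 \<le> (D * M)^2" using dev unfolding M_def by (intro power_mono) auto
      thus ?thesis using M2 by (simp add: power_mult_distrib)
    qed
    have e1: "(real m - w)^2 / w \<le> D^2 * (1 + 1/w0)"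
    proof (cases "w \<le> 1")
      case True
      hence "(real m - w)^2 \<le> D^2" using sq by simp
      hence "(real m - w)^2 / w \<le> D^2 / w" using w by (simp add: divide_right_mono)
      also have "\<dots> \<le> D^2 / w0" using w0 by (simp add: frac_le)
      also have "\<dots> \<le> D^2 * (1 + 1/w0)" by (simp add: algebra_simps)
      finally show ?thesis .
    next
      case False
      hence "(real m - w)^2 \<le> D^2 * w" using sq by simp
      hence "(real m - w)^2 / w \<le> D^2" using w by (simp add: divide_le_eq)
      also have "\<dots> \<le> D^2 * (1 + 1/w0)" using w0 by (simp add: mult_le_cancel_left1)
      finally show ?thesis .
    qed
    have e2: "sqrt (real m) \<le> sqrt (1 + D) * M"
    proof -
      have "real m \<le> w + D * M" using dev unfolding M_def by linarith
      also have "\<dots> \<le> M^2 + D * M^2"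
      proof -
        have "w \<le> M^2" using M2 by simp
        moreover have "D * M \<le> D * M^2" using M1 D by (simp add: power2_eq_square)
        ultimately show ?thesis by linarith
      qed
      also have "\<dots> = (1 + D) * M^2" by (simp add: algebra_simps)
      finally have "sqrt (real m) \<le> sqrt ((1 + D) * M^2)" by simp
      also have "\<dots> = sqrt (1 + D) * M" using M1 by (simp add: real_sqrt_mult)
      finally show ?thesis .
    qed
    have "\<kappa> / M = exp (- 3/2 - D^2 * (1 + 1/w0)) / (sqrt (1 + D) * M)" unfolding \<kappa>_def by simp
    also have "\<dots> \<le> exp (- 3/2 - (real m - w)^2 / w) / sqrt (real m)"
      using e1 e2 m1 by (intro frac_le) auto
    also have "\<dots> \<le> pp w m" by (rule pp_lower[OF w m1])
    finally show ?thesis .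
  qed
  thus ?thesis unfolding \<kappa>_def M_def .
qed



lemma max_k_aux: assumes "1 \<le> k" "0 \<le> x" shows "(k - 1) * max 1 (x / k) \<le> max k (x::real)"
proof -
  have "k * max 1 (x / k) = max k x" using assms by (simp add: max_def field_simps)
  moreover have "(k - 1) * max 1 (x / k) \<le> k * max 1 (x / k)" by (simp add: mult_right_mono)
  ultimately show ?thesis by simp
qed

lemma max_k_aux2: assumes "1 \<le> k" "0 \<le> x" shows "max 1 (x / k) \<le> max k (x::real)"
proof -
  have "x / k \<le> x" using assms by (simp add: divide_le_eq mult_le_cancel_left1 mult_left_le)
  thus ?thesis using assms by (simp add: max_def)
qed

lemma partA_w:
  fixes lam w :: "nat \<Rightarrow> real"
  assumes k: "k \<ge> 1" and lam: "\<forall>i<k. lam i > 0" and w: "\<forall>i<k. w i > 0"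
    and sw: "(\<Sum>i<k. lam i * w i) = R" and R: "Lam k lam \<le> R"
    and \<delta>: "0 < \<delta>" "\<delta> \<le> 1"
  shows "exp (- 3/2 - (Lam k lam * real k / Lmin k lam)^2 * (1 + real k))
           / sqrt (1 + Lam k lam * real k / Lmin k lam) * sqrt (Lmin k lam)
           * (exp (-5/2) * (\<delta> / real k) / 2) ^ (k - 1) / sqrt R
         \<le> (\<Sum>r\<in>{r \<in> HH k lam R. \<forall>i<k. \<bar>real (r i) - w i\<bar>
                 \<le> Lam k lam / lam i * max (real k) (\<delta> * sqrt (w i))}. \<Prod>i<k. pp (w i) (r i))"
proof -
  note L = Lam_props[OF k lam]
  define \<Lambda> where "\<Lambda> = Lam k lam"
  define Lm where "Lm = Lmin k lam"
  have \<Lambda>pos: "0 < \<Lambda>" and Lmpos: "0 < Lm" and LmL: "Lm \<le> \<Lambda>"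
    and lamL: "\<forall>i<k. lam i \<le> \<Lambda>" and Lmlam: "\<forall>i<k. Lm \<le> lam i"
    using L unfolding \<Lambda>_def Lm_def by auto
  have kr: "1 \<le> real k" using k by simp
  obtain j where j: "j < k" "\<forall>i<k. w i \<le> w j" using argmax_obtain[OF k] by blast
  have wj: "0 < w j" and lj: "0 < lam j" using w lam j by auto
  have Rle: "R \<le> real k * \<Lambda> * w j"
  proof -
    have "R = (\<Sum>i<k. lam i * w i)" using sw by simp
    also have "\<dots> \<le> (\<Sum>i<k. \<Lambda> * w j)"
      using lamL j w lam \<Lambda>pos by (intro sum_mono mult_mono) (auto simp: less_imp_le)
    also have "\<dots> = real k * \<Lambda> * w j" by simp
    finally show ?thesis .
  qed
  have Rpos: "0 < R" using R \<Lambda>pos unfolding \<Lambda>_def by linarith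
  have wj0: "1 / real k \<le> w j"
  proof -
    have "\<Lambda> \<le> real k * \<Lambda> * w j" using Rle R unfolding \<Lambda>_def by linarith
    hence "\<Lambda> * 1 \<le> \<Lambda> * (real k * w j)" by (simp add: algebra_simps)
    hence "1 \<le> real k * w j" using \<Lambda>pos by (simp add: mult_le_cancel_left_pos)
    thus ?thesis using kr by (simp add: divide_le_eq mult.commute)
  qed
  have ljwj: "lam j * w j \<le> R"
  proof -
    have "lam j * w j \<le> (\<Sum>i<k. lam i * w i)"
      using j lam w by (intro member_le_sum) (auto intro: mult_nonneg_nonneg less_imp_le)
    thus ?thesis using sw by simp
  qed
  define I where "I = {..<k} - {j}"
  have finI: "finite I" and cardI: "card I = k - 1" using j by (auto simp: I_def)
  define a where "a = (\<lambda>i. max 1 (\<delta> * sqrt (w i) / real k))"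
  define A where "A = (\<lambda>i. {m::nat. w i - a i \<le> real m \<and> real m \<le> w i})"
  define S where "S = Box I A"
  have finS: "finite S" unfolding S_def A_def by (intro finite_Box finI) (auto intro: finite_window)
  define Dd where "Dd = (\<lambda>s::nat\<Rightarrow>nat. R - (\<Sum>i<k. lam i * real (s i)))"
  define mm where "mm = (\<lambda>s. nat \<lfloor>Dd s / lam j\<rfloor>)"
  define g where "g = (\<lambda>s::nat\<Rightarrow>nat. s(j := mm s))"
  define T where "T = (\<Sum>i\<in>I. lam i * a i)"
  define HW where "HW = {r \<in> HH k lam R. \<forall>i<k. \<bar>real (r i) - w i\<bar>
                 \<le> Lam k lam / lam i * max (real k) (\<delta> * sqrt (w i))}"
  define D where "D = \<Lambda> * real k / Lm"
  have D1: "1 \<le> D"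
  proof -
    have "\<Lambda> * 1 \<le> \<Lambda> * real k" using kr \<Lambda>pos by (intro mult_left_mono) auto
    hence "Lm \<le> \<Lambda> * real k" using LmL by linarith
    thus ?thesis unfolding D_def using Lmpos by (simp add: le_divide_eq)
  qed
  have a1: "\<And>i. 1 \<le> a i" unfolding a_def by simp
  have aj: "\<And>i. i < k \<Longrightarrow> a i \<le> max 1 (\<delta> * sqrt (w j) / real k)"
  proof -
    fix i assume i: "i < k"
    have "sqrt (w i) \<le> sqrt (w j)" using j i by simp
    hence "\<delta> * sqrt (w i) \<le> \<delta> * sqrt (w j)" using \<delta> by (intro mult_left_mono) auto
    hence "\<delta> * sqrt (w i) / real k \<le> \<delta> * sqrt (w j) / real k" using kr by (intro divide_right_mono) auto
    thus "a i \<le> max 1 (\<delta> * sqrt (w j) / real k)" unfolding a_def by auto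
  qed
  have Tb: "T \<le> \<Lambda> * max (real k) (\<delta> * sqrt (w j))"
  proof -
    have "T \<le> (\<Sum>i\<in>I. \<Lambda> * max 1 (\<delta> * sqrt (w j) / real k))"
      unfolding T_def using lamL lam aj a1 \<Lambda>pos
      by (intro sum_mono mult_mono) (auto simp: I_def less_imp_le intro: order_trans[OF zero_le_one])
    also have "\<dots> = \<Lambda> * ((real k - 1) * max 1 (\<delta> * sqrt (w j) / real k))"
      using cardI k by (simp add: of_nat_diff)
    also have "\<dots> \<le> \<Lambda> * max (real k) (\<delta> * sqrt (w j))"
      using max_k_aux[OF kr, of "\<delta> * sqrt (w j)"] \<delta> \<Lambda>pos wj by (intro mult_left_mono) auto
    finally show ?thesis .
  qed
  have sfacts: "s j = 0 \<and> (\<forall>i. k \<le> i \<longrightarrow> s i = 0) \<and> (\<forall>i\<in>I. s i \<in> A i)" if "s \<in> S" for s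
    using that j unfolding S_def Box_def I_def by auto
  have sumI: "(\<Sum>i<k. lam i * real (s i)) = (\<Sum>i\<in>I. lam i * real (s i))" if "s \<in> S" for s
    using sum_split_j[OF j(1), of "\<lambda>i. lam i * real (s i)"] sfacts[OF that] unfolding I_def by simp
  have wI: "(\<Sum>i\<in>I. lam i * w i) = R - lam j * w j"
    using sum_split_j[OF j(1), of "\<lambda>i. lam i * w i"] sw unfolding I_def by simp
  have Dd_bounds: "lam j * w j \<le> Dd s \<and> Dd s - lam j * w j \<le> T" if sS: "s \<in> S" for s
  proof -
    have up: "(\<Sum>i\<in>I. lam i * real (s i)) \<le> (\<Sum>i\<in>I. lam i * w i)"
      using sfacts[OF sS] lam by (intro sum_mono mult_left_mono) (auto simp: I_def A_def less_imp_le)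
    have lo: "(\<Sum>i\<in>I. lam i * (w i - a i)) \<le> (\<Sum>i\<in>I. lam i * real (s i))"
      using sfacts[OF sS] lam by (intro sum_mono mult_left_mono) (auto simp: I_def A_def less_imp_le)
    have "(\<Sum>i\<in>I. lam i * (w i - a i)) = (\<Sum>i\<in>I. lam i * w i) - T"
      unfolding T_def by (simp add: algebra_simps sum_subtractf)
    thus ?thesis using up lo wI sumI[OF sS] unfolding Dd_def by linarith
  qed
  have mm_facts: "lam j * real (mm s) \<le> Dd s \<and> Dd s < lam j * real (mm s) + lam j" if sS: "s \<in> S" for s
  proof -
    have Dpos: "0 < Dd s / lam j" using Dd_bounds[OF sS] wj lj by (smt (verit) divide_pos_pos mult_pos_pos)
    have rm: "real (mm s) = real_of_int \<lfloor>Dd s / lam j\<rfloor>" unfolding mm_def using Dpos by simp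
    have "real (mm s) \<le> Dd s / lam j" "Dd s / lam j < real (mm s) + 1" unfolding rm by linarith+
    thus ?thesis using lj by (simp add: field_simps)
  qed
  have gsum: "(\<Sum>i<k. lam i * real (g s i)) = lam j * real (mm s) + R - Dd s" if sS: "s \<in> S" for s
  proof -
    have "(\<Sum>i<k. lam i * real (g s i)) = lam j * real (mm s) + (\<Sum>i\<in>I. lam i * real (g s i))"
      using sum_split_j[OF j(1), of "\<lambda>i. lam i * real (g s i)"] unfolding I_def g_def by simp
    also have "(\<Sum>i\<in>I. lam i * real (g s i)) = (\<Sum>i\<in>I. lam i * real (s i))"
      unfolding g_def by (intro sum.cong) (auto simp: I_def)
    finally show ?thesis using sumI[OF sS] unfolding Dd_def by simp
  qed
  have devj: "\<bar>real (mm s) - w j\<bar> \<le> \<Lambda> / lam j * max (real k) (\<delta> * sqrt (w j))" if sS: "s \<in> S" for s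
  proof -
    have M0: "\<Lambda> \<le> \<Lambda> * max (real k) (\<delta> * sqrt (w j))"
    proof -
      have "1 \<le> max (real k) (\<delta> * sqrt (w j))" using kr by simp
      thus ?thesis using \<Lambda>pos by (simp add: mult_le_cancel_left1)
    qed
    have "lam j * (real (mm s) - w j) \<le> T" using mm_facts[OF sS] Dd_bounds[OF sS] by (simp add: algebra_simps)
    moreover have "- lam j < lam j * (real (mm s) - w j)" using mm_facts[OF sS] Dd_bounds[OF sS] by (simp add: algebra_simps)
    ultimately have "\<bar>lam j * (real (mm s) - w j)\<bar> \<le> \<Lambda> * max (real k) (\<delta> * sqrt (w j))"
      using Tb M0 lamL j by (auto simp: abs_le_iff)
    hence "lam j * \<bar>real (mm s) - w j\<bar> \<le> \<Lambda> * max (real k) (\<delta> * sqrt (w j))"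
      using lj by (simp add: abs_mult)
    thus ?thesis using lj by (simp add: field_simps)
  qed
  have gHW: "g s \<in> HW" if sS: "s \<in> S" for s
  proof -
    have z: "\<forall>i\<ge>k. g s i = 0" using sfacts[OF sS] j unfolding g_def by auto
    have sm: "R - Lam k lam < (\<Sum>i<k. lam i * real (g s i)) \<and> (\<Sum>i<k. lam i * real (g s i)) \<le> R"
      using gsum[OF sS] mm_facts[OF sS] lamL j unfolding \<Lambda>_def by auto
    have dv: "\<forall>i<k. \<bar>real (g s i) - w i\<bar> \<le> Lam k lam / lam i * max (real k) (\<delta> * sqrt (w i))"
    proof (intro allI impI)
      fix i assume i: "i < k"
      show "\<bar>real (g s i) - w i\<bar> \<le> Lam k lam / lam i * max (real k) (\<delta> * sqrt (w i))"
      proof (cases "i = j")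
        case True thus ?thesis using devj[OF sS] unfolding g_def \<Lambda>_def by simp
      next
        case False
        hence iI: "i \<in> I" using i unfolding I_def by simp
        have "\<bar>real (s i) - w i\<bar> \<le> a i" using sfacts[OF sS] iI unfolding A_def by auto
        also have "a i \<le> max (real k) (\<delta> * sqrt (w i))" unfolding a_def
        proof -
          have "0 \<le> \<delta> * sqrt (w i)" using \<delta> w i by (intro mult_nonneg_nonneg) auto
          thus "max 1 (\<delta> * sqrt (w i) / real k) \<le> max (real k) (\<delta> * sqrt (w i))"
            using max_k_aux2[OF kr, of "\<delta> * sqrt (w i)"] by simp
        qed
        also have "\<dots> \<le> Lam k lam / lam i * max (real k) (\<delta> * sqrt (w i))"
        proof -
          have "1 \<le> Lam k lam / lam i" using lamL lam i unfolding \<Lambda>_def by simp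
          moreover have "0 \<le> max (real k) (\<delta> * sqrt (w i))" by simp
          ultimately show ?thesis by (subst mult_le_cancel_right1) auto
        qed
        finally show ?thesis using False unfolding g_def by simp
      qed
    qed
    show ?thesis unfolding HW_def HH_def using z sm dv by auto
  qed
  have finHW: "finite HW"
    using finite_HH[OF k lam, of R] unfolding HW_def by (rule finite_subset[rotated]) auto
  have inj: "inj_on g S"
  proof (rule inj_onI)
    fix s s' assume sS: "s \<in> S" and s'S: "s' \<in> S" and e: "g s = g s'"
    show "s = s'"
    proof
      fix i show "s i = s' i"
        using fun_cong[OF e, of i] sfacts[OF sS] sfacts[OF s'S] unfolding g_def by (cases "i = j") auto
    qed
  qed
  define M where "M = max 1 (sqrt (w j))"
  define \<kappa> where "\<kappa> = exp (- 3/2 - D^2 * (1 + 1 / (1 / real k))) / sqrt (1 + D)"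
  have kpos: "0 \<le> \<kappa>" unfolding \<kappa>_def using D1 by (intro divide_nonneg_nonneg) auto
  have M1: "1 \<le> M" unfolding M_def by simp
  have ppj: "\<kappa> / M \<le> pp (w j) (mm s)" if sS: "s \<in> S" for s
  proof -
    have "\<bar>real (mm s) - w j\<bar> \<le> \<Lambda> / lam j * max (real k) (\<delta> * sqrt (w j))" by (rule devj[OF sS])
    also have "\<dots> \<le> (\<Lambda> / Lm) * (real k * M)"
    proof (rule mult_mono)
      show "\<Lambda> / lam j \<le> \<Lambda> / Lm" using Lmlam j Lmpos \<Lambda>pos by (intro divide_left_mono) auto
      have "\<delta> * sqrt (w j) \<le> 1 * sqrt (w j)" using \<delta> wj by (intro mult_right_mono) auto
      also have "\<dots> \<le> real k * M"
      proof -
        have "sqrt (w j) \<le> M" unfolding M_def by simp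
        moreover have "1 * M \<le> real k * M" using kr M1 by (intro mult_right_mono) auto
        ultimately show ?thesis by simp
      qed
      finally have "\<delta> * sqrt (w j) \<le> real k * M" .
      moreover have "real k \<le> real k * M" using M1 kr by (simp add: mult_le_cancel_left1)
      ultimately show "max (real k) (\<delta> * sqrt (w j)) \<le> real k * M" by simp
      show "0 \<le> \<Lambda> / Lm" using \<Lambda>pos Lmpos by simp
      show "0 \<le> max (real k) (\<delta> * sqrt (w j))" by simp
    qed
    also have "\<dots> = D * M" unfolding D_def by simp
    finally have dev: "\<bar>real (mm s) - w j\<bar> \<le> D * max 1 (sqrt (w j))" unfolding M_def .
    have w0: "0 < 1 / real k" using kr by simp
    show ?thesis using LB_point[OF w0 wj0 D1 dev] unfolding \<kappa>_def M_def .
  qed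
  define c1 where "c1 = exp (-5/2) * (\<delta> / real k) / 2"
  have c1pos: "0 \<le> c1" unfolding c1_def using \<delta> by simp
  have dk: "\<delta> / real k \<le> 1" using \<delta> kr by (simp add: divide_le_eq)
  have dk0: "0 < \<delta> / real k" using \<delta> kr by simp
  have c1le: "c1 \<le> (\<Sum>m\<in>A i. pp (w i) m)" if iI: "i \<in> I" for i
  proof -
    have i: "i < k" using iI unfolding I_def by simp
    have wi: "0 < w i" using w i by simp
    have sq0: "0 \<le> sqrt (w i)" using wi by simp
    have "\<delta> / real k * sqrt (w i) \<le> 1 * sqrt (w i)" using dk wi by (intro mult_right_mono) auto
    hence a2: "a i \<le> max 1 (sqrt (w i))" unfolding a_def by (intro max.mono) auto
    have "(\<delta> / real k) * max 1 (sqrt (w i)) \<le> a i"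
    proof -
      have "(\<delta> / real k) * max 1 (sqrt (w i)) = max (\<delta> / real k) (\<delta> / real k * sqrt (w i))"
        using dk0 by (simp only: max_mult_distrib_left) simp
      also have "\<dots> \<le> a i" unfolding a_def using dk by (intro max.mono) auto
      finally show ?thesis .
    qed
    moreover have "0 < max 1 (sqrt (w i))" by (simp add: less_max_iff_disj)
    ultimately have "\<delta> / real k \<le> a i / max 1 (sqrt (w i))" by (simp add: le_divide_eq)
    hence "c1 \<le> exp (-5/2) * (a i / max 1 (sqrt (w i))) / 2" unfolding c1_def
      by (intro divide_right_mono mult_left_mono) auto
    also have "\<dots> = exp (-5/2) * a i / (2 * max 1 (sqrt (w i)))" by simp
    also have "\<dots> \<le> (\<Sum>m\<in>A i. pp (w i) m)" unfolding A_def by (rule LB_window[OF wi a1 a2])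
    finally show ?thesis .
  qed
  have "\<kappa> / M * c1 ^ (k - 1) \<le> \<kappa> / M * (\<Sum>s\<in>S. \<Prod>i\<in>I. pp (w i) (s i))"
  proof (rule mult_left_mono)
    have "c1 ^ (k - 1) = (\<Prod>i\<in>I. c1)" using cardI by simp
    also have "\<dots> \<le> (\<Prod>i\<in>I. \<Sum>m\<in>A i. pp (w i) m)" using c1le c1pos by (intro prod_mono) auto
    also have "\<dots> = (\<Sum>s\<in>S. \<Prod>i\<in>I. pp (w i) (s i))" unfolding S_def
      by (rule sum_prod_Box[symmetric, OF finI]) (auto simp: A_def intro: finite_window)
    finally show "c1 ^ (k - 1) \<le> (\<Sum>s\<in>S. \<Prod>i\<in>I. pp (w i) (s i))" .
    show "0 \<le> \<kappa> / M" using kpos M1 by simp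
  qed
  also have "\<dots> = (\<Sum>s\<in>S. \<kappa> / M * (\<Prod>i\<in>I. pp (w i) (s i)))" by (simp add: sum_distrib_left)
  also have "\<dots> \<le> (\<Sum>s\<in>S. \<Prod>i<k. pp (w i) (g s i))"
  proof (rule sum_mono)
    fix s assume sS: "s \<in> S"
    have "(\<Prod>i<k. pp (w i) (g s i)) = pp (w j) (g s j) * (\<Prod>i\<in>I. pp (w i) (g s i))"
      using prod_split_j[OF j(1), of "\<lambda>i. pp (w i) (g s i)"] unfolding I_def by simp
    also have "(\<Prod>i\<in>I. pp (w i) (g s i)) = (\<Prod>i\<in>I. pp (w i) (s i))"
      unfolding g_def by (intro prod.cong) (auto simp: I_def)
    finally have e: "(\<Prod>i<k. pp (w i) (g s i)) = pp (w j) (mm s) * (\<Prod>i\<in>I. pp (w i) (s i))"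
      unfolding g_def by simp
    have "0 \<le> (\<Prod>i\<in>I. pp (w i) (s i))" using w by (intro prod_nonneg pp_nonneg) (auto simp: I_def less_imp_le)
    thus "\<kappa> / M * (\<Prod>i\<in>I. pp (w i) (s i)) \<le> (\<Prod>i<k. pp (w i) (g s i))"
      unfolding e using ppj[OF sS] by (intro mult_right_mono) auto
  qed
  also have "\<dots> = (\<Sum>r\<in>g ` S. \<Prod>i<k. pp (w i) (r i))" by (simp add: sum.reindex[OF inj])
  also have "\<dots> \<le> (\<Sum>r\<in>HW. \<Prod>i<k. pp (w i) (r i))"
    using gHW finHW w by (intro sum_mono2) (auto intro!: prod_nonneg pp_nonneg simp: less_imp_le)
  finally have main: "\<kappa> / M * c1 ^ (k - 1) \<le> (\<Sum>r\<in>HW. \<Prod>i<k. pp (w i) (r i))" .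
  have Mb: "M \<le> sqrt R / sqrt Lm"
  proof -
    have "w j \<le> R / Lm"
    proof -
      have "Lm * w j \<le> lam j * w j" using Lmlam j wj by (intro mult_right_mono) auto
      thus ?thesis using ljwj Lmpos by (simp add: le_divide_eq mult.commute)
    qed
    moreover have "1 \<le> R / Lm" using LmL R Lmpos unfolding \<Lambda>_def by (simp add: le_divide_eq)
    ultimately have "M \<le> sqrt (R / Lm)" unfolding M_def by auto
    thus ?thesis by (simp add: real_sqrt_divide)
  qed
  have "\<kappa> * sqrt Lm * c1 ^ (k - 1) / sqrt R \<le> \<kappa> / M * c1 ^ (k - 1)"
  proof -
    have "\<kappa> * sqrt Lm / sqrt R = \<kappa> / (sqrt R / sqrt Lm)" by simp
    also have "\<dots> \<le> \<kappa> / M" using Mb M1 kpos Rpos Lmpos by (intro divide_left_mono) auto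
    finally have "\<kappa> * sqrt Lm / sqrt R * c1 ^ (k - 1) \<le> \<kappa> / M * c1 ^ (k - 1)"
      using c1pos by (intro mult_right_mono) auto
    thus ?thesis by simp
  qed
  also note main
  finally show ?thesis unfolding HW_def \<kappa>_def c1_def D_def \<Lambda>_def Lm_def by simp
qed



lemma alpha_eq:
  fixes lam z :: "nat \<Rightarrow> real"
  assumes k: "k \<ge> 1" and lam: "\<forall>i<k. lam i > 0" and z: "\<forall>i<k. 1 \<le> z i" and R: "0 < R"
  shows "(\<Sum>i<k. lam i * exp (alpha k lam z R * lam i) * z i) = R"
proof -
  define F where "F = (\<lambda>a. \<Sum>i<k. lam i * exp (a * lam i) * z i)"
  note L = Lam_props[OF k lam]
  define Lm where "Lm = Lmin k lam"
  have k0: "0 < k" using k by simp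
  have ne: "{..<k} \<noteq> {}" using k0 by auto
  have mono: "F a < F b" if ab: "a < b" for a b
    unfolding F_def
  proof (rule sum_strict_mono[OF finite_lessThan ne])
    fix i assume "i \<in> {..<k}"
    hence i: "0 < lam i" "1 \<le> z i" using lam z by auto
    have "exp (a * lam i) < exp (b * lam i)" using ab i by simp
    hence "lam i * exp (a * lam i) < lam i * exp (b * lam i)" using i by simp
    thus "lam i * exp (a * lam i) * z i < lam i * exp (b * lam i) * z i" using i by (intro mult_strict_right_mono) auto
  qed
  define F0 where "F0 = F 0"
  have F0pos: "0 < F0" unfolding F0_def F_def
    using lam z ne by (intro sum_pos) (auto intro!: mult_pos_pos simp: less_le_trans[OF zero_less_one])
  define hi where "hi = max 0 (ln (R / lam 0) / lam 0)"
  define lo where "lo = min 0 (ln (R / F0) / Lm)"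
  have l0: "0 < lam 0" "1 \<le> z 0" using lam z k0 by auto
  have Fhi: "R \<le> F hi"
  proof -
    have "ln (R / lam 0) / lam 0 \<le> hi" unfolding hi_def by simp
    hence "ln (R / lam 0) / lam 0 * lam 0 \<le> hi * lam 0" using l0 by (intro mult_right_mono) auto
    hence "ln (R / lam 0) \<le> hi * lam 0" using l0 by simp
    hence "R / lam 0 \<le> exp (hi * lam 0)" using R l0 by (metis divide_pos_pos exp_le_cancel_iff exp_ln)
    hence "R \<le> lam 0 * exp (hi * lam 0)" using l0 by (simp add: divide_le_eq mult.commute)
    also have "\<dots> \<le> lam 0 * exp (hi * lam 0) * z 0"
    proof -
      have "lam 0 * exp (hi * lam 0) * 1 \<le> lam 0 * exp (hi * lam 0) * z 0" using l0 by (intro mult_left_mono) auto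
      thus ?thesis by simp
    qed
    also have "\<dots> \<le> F hi" unfolding F_def using lam z k0
      by (intro member_le_sum[of 0 "{..<k}" "\<lambda>i. lam i * exp (hi * lam i) * z i"])
        (auto intro!: mult_nonneg_nonneg simp: less_imp_le order_trans[OF zero_le_one])
    finally show ?thesis .
  qed
  have Flo: "F lo \<le> R"
  proof -
    have "F lo \<le> (\<Sum>i<k. lam i * exp (lo * Lm) * z i)" unfolding F_def
    proof (intro sum_mono mult_right_mono mult_left_mono)
      fix i assume "i \<in> {..<k}"
      hence i: "0 < lam i" "1 \<le> z i" "Lm \<le> lam i" using lam z L unfolding Lm_def by auto
      have "lo \<le> 0" unfolding lo_def by simp
      hence "lo * lam i \<le> lo * Lm" using i by (simp add: mult_left_mono_neg)
      thus "exp (lo * lam i) \<le> exp (lo * Lm)" by simp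
      show "0 \<le> lam i" "0 \<le> z i" using i by auto
    qed
    also have "\<dots> = exp (lo * Lm) * F0" unfolding F0_def F_def by (simp add: sum_distrib_left algebra_simps)
    also have "\<dots> \<le> exp (ln (R / F0)) * F0"
    proof -
      have Lmp: "0 < Lm" using L unfolding Lm_def by simp
      have "lo \<le> ln (R / F0) / Lm" unfolding lo_def by simp
      hence "lo * Lm \<le> ln (R / F0)" using Lmp by (simp add: le_divide_eq)
      thus ?thesis using F0pos by simp
    qed
    also have "\<dots> = R" using R F0pos by simp
    finally show ?thesis .
  qed
  have cont: "continuous_on {lo..hi} F" unfolding F_def by (intro continuous_intros)
  have "lo \<le> hi" unfolding lo_def hi_def by simp
  then obtain a where a: "F a = R" using IVT'[of F lo R hi, OF Flo Fhi _ cont] by auto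
  have uniq: "\<exists>!a. F a = R"
  proof (rule ex1I[of _ a])
    show "F a = R" by (rule a)
    fix b assume "F b = R"
    thus "b = a" using mono[of a b] mono[of b a] a by (cases a b rule: linorder_cases) auto
  qed
  have "F (THE a. F a = R) = R" using theI'[OF uniq] .
  thus ?thesis unfolding alpha_def F_def .
qed


lemma tilt1:
  fixes z a l :: real
  assumes z: "0 < z"
  shows "exp (- z) * z ^ n / fact n
       = exp (- Qf (exp (a * l)) * z) * exp (- (a * l * (real n - exp (a * l) * z))) * pp (exp (a * l) * z) n"
proof -
  define u where "u = exp (a * l)"
  have Q: "Qf u = u * (a * l) - u + 1" unfolding Qf_def u_def by simp
  have un: "u ^ n = exp (real n * (a * l))" unfolding u_def by (simp add: exp_of_nat_mult)
  have ex: "exp (- ((u * (a * l) - u + 1) * z)) * exp (- (a * l * (real n - u * z))) * exp (- (u * z)) * exp (real n * (a * l)) = exp (- z)"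
  proof -
    have "- ((u * (a * l) - u + 1) * z) + - (a * l * (real n - u * z)) + - (u * z) + real n * (a * l) = - z"
      by (simp add: algebra_simps)
    thus ?thesis by (simp only: exp_add[symmetric])
  qed
  have "exp (- Qf u * z) * exp (- (a * l * (real n - u * z))) * pp (u * z) n
      = (exp (- ((u * (a * l) - u + 1) * z)) * exp (- (a * l * (real n - u * z))) * exp (- (u * z)) * exp (real n * (a * l))) * z ^ n / fact n"
    unfolding pp_def Q power_mult_distrib un by (simp add: algebra_simps)
  also have "\<dots> = exp (- z) * z ^ n / fact n" unfolding ex ..
  finally show ?thesis unfolding u_def by simp
qed

lemma tilt:
  fixes lam z :: "nat \<Rightarrow> real" and a :: real
  assumes z: "\<forall>i<k. 0 < z i"
    and sw: "(\<Sum>i<k. lam i * (exp (a * lam i) * z i)) = R"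
  shows "poisson_prob k z r = (\<Prod>i<k. exp (- Qf (exp (a * lam i)) * z i))
          * exp (- (a * ((\<Sum>i<k. lam i * real (r i)) - R))) * (\<Prod>i<k. pp (exp (a * lam i) * z i) (r i))"
proof -
  have "poisson_prob k z r = (\<Prod>i<k. exp (- Qf (exp (a * lam i)) * z i) * exp (- (a * lam i * (real (r i) - exp (a * lam i) * z i))) * pp (exp (a * lam i) * z i) (r i))"
    unfolding poisson_prob_def using z by (intro prod.cong refl tilt1) auto
  also have "\<dots> = (\<Prod>i<k. exp (- Qf (exp (a * lam i)) * z i)) * (\<Prod>i<k. exp (- (a * lam i * (real (r i) - exp (a * lam i) * z i)))) * (\<Prod>i<k. pp (exp (a * lam i) * z i) (r i))"
    by (simp add: prod.distrib)
  also have "(\<Prod>i<k. exp (- (a * lam i * (real (r i) - exp (a * lam i) * z i)))) = exp (- (a * ((\<Sum>i<k. lam i * real (r i)) - R)))"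
  proof -
    have "(\<Prod>i<k. exp (- (a * lam i * (real (r i) - exp (a * lam i) * z i)))) = exp (\<Sum>i<k. - (a * lam i * (real (r i) - exp (a * lam i) * z i)))"
      by (simp add: exp_sum)
    also have "(\<Sum>i<k. - (a * lam i * (real (r i) - exp (a * lam i) * z i))) = - (a * ((\<Sum>i<k. lam i * real (r i)) - (\<Sum>i<k. lam i * (exp (a * lam i) * z i))))"
      by (simp add: sum_distrib_left sum_subtractf algebra_simps sum_negf)
    finally show ?thesis using sw by simp
  qed
  finally show ?thesis .
qed

lemma exp_tilt_bounds:
  fixes a S R L :: real
  assumes "R - L < S" "S \<le> R" "0 \<le> L"
  shows "exp (- (L * \<bar>a\<bar>)) \<le> exp (- (a * (S - R)))" "exp (- (a * (S - R))) \<le> exp (L * \<bar>a\<bar>)"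
proof -
  have "\<bar>S - R\<bar> \<le> L" using assms by auto
  hence "\<bar>a\<bar> * \<bar>S - R\<bar> \<le> \<bar>a\<bar> * L" by (intro mult_left_mono) auto
  hence "\<bar>a * (S - R)\<bar> \<le> L * \<bar>a\<bar>" by (simp add: abs_mult mult.commute)
  thus "exp (- (L * \<bar>a\<bar>)) \<le> exp (- (a * (S - R)))" "exp (- (a * (S - R))) \<le> exp (L * \<bar>a\<bar>)"
    by (simp_all add: abs_le_iff)
qed



theorem lemma4p2:
  fixes k :: nat and lam :: "nat \<Rightarrow> real"
  assumes "k \<ge> 1" and "\<forall>i<k. lam i > 0"
  shows "\<exists>c::real.
    (\<forall>\<delta>::real. 0 < \<delta> \<and> \<delta> \<le> 1 \<longrightarrow>
      (\<exists>C>0. \<forall>(z::nat \<Rightarrow> real) (R::real).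
        (\<forall>i<k. z i \<ge> 1) \<longrightarrow> R \<ge> max (Lam k lam) (\<delta> * (\<Sum>i<k. z i)) \<longrightarrow>
        Prob k z (HHd k lam z R \<delta>) \<ge>
          C * (exp (- c * \<bar>alpha k lam z R\<bar>) / sqrt R *
            (\<Prod>i<k. exp (- Qf (exp (alpha k lam z R * lam i)) * z i))))) \<and>
    (\<exists>C>0. \<forall>(z::nat \<Rightarrow> real) (R::real).
        (\<forall>i<k. z i \<ge> 1) \<longrightarrow> R \<ge> Lam k lam \<longrightarrow>
        Prob k z (HH k lam R) \<le>
          C * (exp (c * \<bar>alpha k lam z R\<bar>) / sqrt R *
            (\<Prod>i<k. exp (- Qf (exp (alpha k lam z R * lam i)) * z i))))"
proof -
  note k = assms(1) and lam = assms(2)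
  note L = Lam_props[OF k lam]
  define \<Lambda> where "\<Lambda> = Lam k lam"
  have \<Lambda>pos: "0 < \<Lambda>" unfolding \<Lambda>_def using L by simp
  have common: "(\<forall>i<k. 0 < exp (alpha k lam z R * lam i) * z i)
      \<and> (\<Sum>i<k. lam i * (exp (alpha k lam z R * lam i) * z i)) = R
      \<and> (\<forall>r. poisson_prob k z r = (\<Prod>i<k. exp (- Qf (exp (alpha k lam z R * lam i)) * z i))
          * exp (- (alpha k lam z R * ((\<Sum>i<k. lam i * real (r i)) - R)))
          * (\<Prod>i<k. pp (exp (alpha k lam z R * lam i) * z i) (r i)))"
    if z: "\<forall>i<k. z i \<ge> 1" and R: "\<Lambda> \<le> R" for z :: "nat \<Rightarrow> real" and R
  proof -
    have Rpos: "0 < R" using R \<Lambda>pos by linarith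
    have sw: "(\<Sum>i<k. lam i * (exp (alpha k lam z R * lam i) * z i)) = R"
      using alpha_eq[OF k lam z Rpos] by (simp add: mult.assoc)
    have zp: "\<forall>i<k. 0 < z i" using z by (auto intro: less_le_trans[OF zero_less_one])
    show ?thesis using sw zp tilt[OF zp sw] by auto
  qed
  define Cb where "Cb = 2 * (Lam k lam / Lmin k lam + 1) * sqrt (real k * Lam k lam)"
  have Cbpos: "0 < Cb" unfolding Cb_def using L k by (intro mult_pos_pos add_pos_pos) auto
  have partb: "\<forall>(z::nat \<Rightarrow> real) (R::real).
        (\<forall>i<k. z i \<ge> 1) \<longrightarrow> R \<ge> Lam k lam \<longrightarrow>
        Prob k z (HH k lam R) \<le>
          Cb * (exp (\<Lambda> * \<bar>alpha k lam z R\<bar>) / sqrt R *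
            (\<Prod>i<k. exp (- Qf (exp (alpha k lam z R * lam i)) * z i)))"
  proof (intro allI impI)
    fix z :: "nat \<Rightarrow> real" and R assume z: "\<forall>i<k. z i \<ge> 1" and R: "R \<ge> Lam k lam"
    define a where "a = alpha k lam z R"
    define w where "w = (\<lambda>i. exp (a * lam i) * z i)"
    define E where "E = (\<Prod>i<k. exp (- Qf (exp (a * lam i)) * z i))"
    define P where "P = (\<lambda>r::nat\<Rightarrow>nat. \<Prod>i<k. pp (w i) (r i))"
    have cm: "(\<forall>i<k. 0 < w i) \<and> (\<Sum>i<k. lam i * w i) = R
       \<and> (\<forall>r. poisson_prob k z r = E * exp (- (a * ((\<Sum>i<k. lam i * real (r i)) - R))) * P r)"
      using common[OF z, of R] R unfolding \<Lambda>_def a_def w_def E_def P_def by simp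
    have E0: "0 \<le> E" unfolding E_def by (intro prod_nonneg) auto
    have "Prob k z (HH k lam R) = (\<Sum>r\<in>HH k lam R. E * exp (- (a * ((\<Sum>i<k. lam i * real (r i)) - R))) * P r)"
      unfolding Prob_def using cm by simp
    also have "\<dots> \<le> (\<Sum>r\<in>HH k lam R. E * exp (\<Lambda> * \<bar>a\<bar>) * P r)"
    proof (rule sum_mono)
      fix r assume r: "r \<in> HH k lam R"
      have "exp (- (a * ((\<Sum>i<k. lam i * real (r i)) - R))) \<le> exp (\<Lambda> * \<bar>a\<bar>)"
        using r \<Lambda>pos unfolding HH_def \<Lambda>_def by (intro exp_tilt_bounds(2)) auto
      moreover have "0 \<le> P r" unfolding P_def using cm by (intro prod_nonneg pp_nonneg) (auto simp: less_imp_le)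
      ultimately show "E * exp (- (a * ((\<Sum>i<k. lam i * real (r i)) - R))) * P r \<le> E * exp (\<Lambda> * \<bar>a\<bar>) * P r"
        using E0 by (intro mult_right_mono mult_left_mono) auto
    qed
    also have "\<dots> = E * exp (\<Lambda> * \<bar>a\<bar>) * (\<Sum>r\<in>HH k lam R. P r)" by (simp add: sum_distrib_left)
    also have "\<dots> \<le> E * exp (\<Lambda> * \<bar>a\<bar>) * (Cb / sqrt R)"
    proof (rule mult_left_mono)
      show "(\<Sum>r\<in>HH k lam R. P r) \<le> Cb / sqrt R"
        unfolding P_def Cb_def using partB_w[OF k lam _ _ R] cm by simp
      show "0 \<le> E * exp (\<Lambda> * \<bar>a\<bar>)" using E0 by simp
    qed
    also have "\<dots> = Cb * (exp (\<Lambda> * \<bar>a\<bar>) / sqrt R * E)" by simp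
    finally show "Prob k z (HH k lam R) \<le> Cb * (exp (\<Lambda> * \<bar>alpha k lam z R\<bar>) / sqrt R *
            (\<Prod>i<k. exp (- Qf (exp (alpha k lam z R * lam i)) * z i)))"
      unfolding a_def E_def .
  qed
  have parta: "\<forall>\<delta>::real. 0 < \<delta> \<and> \<delta> \<le> 1 \<longrightarrow>
      (\<exists>C>0. \<forall>(z::nat \<Rightarrow> real) (R::real).
        (\<forall>i<k. z i \<ge> 1) \<longrightarrow> R \<ge> max (Lam k lam) (\<delta> * (\<Sum>i<k. z i)) \<longrightarrow>
        Prob k z (HHd k lam z R \<delta>) \<ge>
          C * (exp (- \<Lambda> * \<bar>alpha k lam z R\<bar>) / sqrt R *
            (\<Prod>i<k. exp (- Qf (exp (alpha k lam z R * lam i)) * z i))))"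
  proof (intro allI impI)
    fix \<delta> :: real assume \<delta>: "0 < \<delta> \<and> \<delta> \<le> 1"
    define Ca where "Ca = exp (- 3/2 - (Lam k lam * real k / Lmin k lam)^2 * (1 + real k))
           / sqrt (1 + Lam k lam * real k / Lmin k lam) * sqrt (Lmin k lam)
           * (exp (-5/2) * (\<delta> / real k) / 2) ^ (k - 1)"
    have Capos: "0 < Ca" unfolding Ca_def using L k \<delta>
      by (intro mult_pos_pos divide_pos_pos zero_less_power) (auto intro!: add_pos_nonneg)
    show "\<exists>C>0. \<forall>(z::nat \<Rightarrow> real) (R::real).
        (\<forall>i<k. z i \<ge> 1) \<longrightarrow> R \<ge> max (Lam k lam) (\<delta> * (\<Sum>i<k. z i)) \<longrightarrow>
        Prob k z (HHd k lam z R \<delta>) \<ge>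
          C * (exp (- \<Lambda> * \<bar>alpha k lam z R\<bar>) / sqrt R *
            (\<Prod>i<k. exp (- Qf (exp (alpha k lam z R * lam i)) * z i)))"
    proof (intro exI[of _ Ca] conjI allI impI Capos)
      fix z :: "nat \<Rightarrow> real" and R assume z: "\<forall>i<k. z i \<ge> 1" and R0: "R \<ge> max (Lam k lam) (\<delta> * (\<Sum>i<k. z i))"
      have R: "Lam k lam \<le> R" using R0 by simp
      define a where "a = alpha k lam z R"
      define w where "w = (\<lambda>i. exp (a * lam i) * z i)"
      define E where "E = (\<Prod>i<k. exp (- Qf (exp (a * lam i)) * z i))"
      define P where "P = (\<lambda>r::nat\<Rightarrow>nat. \<Prod>i<k. pp (w i) (r i))"
      have cm: "(\<forall>i<k. 0 < w i) \<and> (\<Sum>i<k. lam i * w i) = R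
         \<and> (\<forall>r. poisson_prob k z r = E * exp (- (a * ((\<Sum>i<k. lam i * real (r i)) - R))) * P r)"
        using common[OF z, of R] R unfolding \<Lambda>_def a_def w_def E_def P_def by simp
      have E0: "0 \<le> E" unfolding E_def by (intro prod_nonneg) auto
      define H where "H = HHd k lam z R \<delta>"
      have Heq: "H = {r \<in> HH k lam R. \<forall>i<k. \<bar>real (r i) - w i\<bar>
                 \<le> Lam k lam / lam i * max (real k) (\<delta> * sqrt (w i))}"
        unfolding H_def HHd_def w_def a_def ..
      have A: "Ca / sqrt R \<le> (\<Sum>r\<in>H. P r)"
        unfolding Heq P_def Ca_def using partA_w[OF k lam _ _ R, of w \<delta>] cm \<delta> by simp
      have "E * exp (- (\<Lambda> * \<bar>a\<bar>)) * (Ca / sqrt R) \<le> E * exp (- (\<Lambda> * \<bar>a\<bar>)) * (\<Sum>r\<in>H. P r)"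
        using A E0 by (intro mult_left_mono) auto
      also have "\<dots> = (\<Sum>r\<in>H. E * exp (- (\<Lambda> * \<bar>a\<bar>)) * P r)" by (simp add: sum_distrib_left)
      also have "\<dots> \<le> (\<Sum>r\<in>H. E * exp (- (a * ((\<Sum>i<k. lam i * real (r i)) - R))) * P r)"
      proof (rule sum_mono)
        fix r assume r: "r \<in> H"
        have "exp (- (\<Lambda> * \<bar>a\<bar>)) \<le> exp (- (a * ((\<Sum>i<k. lam i * real (r i)) - R)))"
          using r \<Lambda>pos unfolding Heq HH_def \<Lambda>_def by (intro exp_tilt_bounds(1)) auto
        moreover have "0 \<le> P r" unfolding P_def using cm by (intro prod_nonneg pp_nonneg) (auto simp: less_imp_le)
        ultimately show "E * exp (- (\<Lambda> * \<bar>a\<bar>)) * P r \<le> E * exp (- (a * ((\<Sum>i<k. lam i * real (r i)) - R))) * P r"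
          using E0 by (intro mult_right_mono mult_left_mono) auto
      qed
      also have "\<dots> = Prob k z H" unfolding Prob_def using cm by simp
      finally have "E * exp (- (\<Lambda> * \<bar>a\<bar>)) * (Ca / sqrt R) \<le> Prob k z H" .
      moreover have "Ca * (exp (- \<Lambda> * \<bar>a\<bar>) / sqrt R * E) = E * exp (- (\<Lambda> * \<bar>a\<bar>)) * (Ca / sqrt R)" by simp
      ultimately have "Ca * (exp (- \<Lambda> * \<bar>a\<bar>) / sqrt R * E) \<le> Prob k z H" by linarith
      thus "Ca * (exp (- \<Lambda> * \<bar>alpha k lam z R\<bar>) / sqrt R *
            (\<Prod>i<k. exp (- Qf (exp (alpha k lam z R * lam i)) * z i))) \<le> Prob k z (HHd k lam z R \<delta>)"
        unfolding a_def E_def H_def .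
    qed
  qed
  show ?thesis
    apply (rule exI[of _ \<Lambda>])
    using parta partb Cbpos by blast
qed


end
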